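(* Let $\mu, \nu$ be compactly supported probability measures on $\mathbb{R}$, and let $\beta \in \mathbb{R}$, $\gamma > 0$. Then \[ (\nu \otimes \mu)[\partial f] = \frac{1}{\gamma}\int (x - \beta) f(x)\, d\mu(x) \quad \text{for every continuously differentiable } f:\mathbb{R}\to\mathbb{R} \] if and only if $\mu = \Phi_{\beta,\gamma}[\nu]$, i.e. $G_\mu(z) = \dfrac{1}{z - \beta - \gamma G_\nu(z)}$. In particular (case $\beta=0,\gamma=1$), $(\nu\otimes\mu)[\partial f] = \int x f\, d\mu$ for all $C^1$ functions $f$ if and only if $\mu = \Phi_{0,1}[\nu]$.
   Context: $(\partial f)(x,y) = \frac{f(x)-f(y)}{x-y}$ for $x\neq y$ and $(\partial f)(x,x) = f'(x)$; $(\nu\otimes\mu)[F] = \iint F(x,y)\,d\nu(x)\,d\mu(y)$. $G_\mu(z) = \int \frac{d\mu(x)}{z-x}$ is the Cauchy transform. For a probability measure $\nu$, $\beta\in\mathbb{R}$, $\gamma>0$, $\Phi_{\beta,\gamma}[\nu]$ denotes the probability measure $\mu$ with $G_\mu(z) = 1/(z-\beta-\gamma G_\nu(z))$; equivalently, if $\nu$ has Jacobi parameters $(\beta_0,\beta_1,\dots),(\gamma_1,\gamma_2,\dots)$ then $\mu$ has Jacobi parameters $(\beta,\beta_0,\beta_1,\dots),(\gamma,\gamma_1,\gamma_2,\dots)$. *)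

theory Defs
  imports "HOL-Probability.Probability"
begin

definition divdiff :: "(real \<Rightarrow> real) \<Rightarrow> real \<Rightarrow> real \<Rightarrow> real" where
  "divdiff f x y = (if x = y then deriv f x else (f x - f y) / (x - y))"

definition cauchy_transform :: "real measure \<Rightarrow> complex \<Rightarrow> complex" where
  "cauchy_transform M z = (\<integral>x. 1 / (z - complex_of_real x) \<partial>M)"

definition cs_prob :: "real measure \<Rightarrow> bool" where
  "cs_prob M \<longleftrightarrow> prob_space M \<and> sets M = sets borel \<and>
     (\<exists>K. compact K \<and> emeasure M K = 1)"

definition C1_real :: "(real \<Rightarrow> real) \<Rightarrow> bool" where
  "C1_real f \<longleftrightarrow> (\<exists>f'. (\<forall>x. (f has_real_derivative f' x) (at x)) \<and> continuous_on UNIV f')"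

end

theory Submission
  imports Defs
begin


definition dd :: "(real\<Rightarrow>real) \<Rightarrow> (real\<Rightarrow>real) \<Rightarrow> real \<Rightarrow> real \<Rightarrow> real" where
  "dd f f' x y = (if x = y then f' x else (f x - f y) / (x - y))"

lemma divdiff_dd:
  assumes "\<And>x. (f has_real_derivative f' x) (at x)"
  shows "divdiff f x y = dd f f' x y"
  using DERIV_imp_deriv[OF assms] unfolding divdiff_def dd_def by simp

lemma dd_sym: "dd f f' x y = dd f f' y x"
  unfolding dd_def by (auto simp: field_simps)

lemma dd_bound:
  assumes der: "\<And>x. (f has_real_derivative f' x) (at x)"
    and B: "\<And>t. a \<le> t \<Longrightarrow> t \<le> b \<Longrightarrow> \<bar>f' t\<bar> \<le> B"
    and x: "a \<le> x" "x \<le> b" and y: "a \<le> y" "y \<le> b"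
  shows "\<bar>dd f f' x y\<bar> \<le> B"
proof -
  have main: "\<bar>dd f f' u v\<bar> \<le> B" if uv: "a \<le> u" "u < v" "v \<le> b" for u v
  proof -
    obtain t where t: "u < t" "t < v" "f v - f u = (v - u) * f' t"
      using MVT2[of u v f f'] der uv by blast
    have "dd f f' u v = f' t" using t uv unfolding dd_def
      by (auto simp: field_simps)
    then show ?thesis using B[of t] t uv by auto
  qed
  consider "x = y" | "x < y" | "y < x" by linarith
  then show ?thesis
  proof cases
    case 1 then show ?thesis using B x by (simp add: dd_def)
  next
    case 2 then show ?thesis using main x y by auto
  next
    case 3 then show ?thesis using main[of y x] x y dd_sym by metis
  qed
qed

lemma diff_bound:
  assumes der: "\<And>x. (f has_real_derivative f' x) (at x)"
    and B: "\<And>t. a \<le> t \<Longrightarrow> t \<le> b \<Longrightarrow> \<bar>f' t\<bar> \<le> B"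
    and x: "a \<le> x" "x \<le> b" 
  shows "\<bar>f x - f a\<bar> \<le> B * (b - a)"
proof (cases "x = a")
  case True 
  have "0 \<le> B" using B[of a] x by linarith
  then show ?thesis using True x by simp
next
  case False
  have "\<bar>dd f f' x a\<bar> \<le> B" using dd_bound[OF der B] x by auto
  then have "\<bar>f x - f a\<bar> / \<bar>x - a\<bar> \<le> B" using False by (simp add: dd_def abs_divide)
  then have "\<bar>f x - f a\<bar> \<le> B * \<bar>x - a\<bar>" using False by (simp add: divide_le_eq)
  also have "\<dots> \<le> B * (b - a)" 
  proof (rule mult_left_mono)
    show "0 \<le> B" using B[of x] x by linarith
  qed (use x in linarith)
  finally show ?thesis .
qed



lemma coeff_zero:
  fixes c :: "nat \<Rightarrow> real"
  assumes R: "R \<ge> 1" and C: "C \<ge> 0" and bnd: "\<And>n. \<bar>c n\<bar> \<le> C * real (Suc n) * R ^ n"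
    and \<delta>: "\<delta> > 0"
    and sums: "\<And>s. 0 < s \<Longrightarrow> s \<le> \<delta> \<Longrightarrow>
        (\<lambda>n. complex_of_real (c n) * (\<i> * complex_of_real s) ^ Suc n) sums 0"
  shows "c k = 0"
proof (induction k rule: less_induct)
  case (less k)
  define F where "F t = (\<Sum>m. complex_of_real (c (m + k)) * t ^ m)" for t :: complex
  define K :: complex where "K = complex_of_real (1 / (2 * R))"
  have Rpos: "R > 0" using R by auto
  have nK: "norm K = 1 / (2 * R)" unfolding K_def norm_of_real using Rpos by simp
  have summK: "summable (\<lambda>m. complex_of_real (c (m + k)) * K ^ m)"
  proof (rule summable_norm_cancel, rule summable_comparison_test)
    show "summable (\<lambda>m. C * R ^ k * (real (Suc m) * (1/2) ^ m + real k * (1/2) ^ m))"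
    proof (rule summable_mult, rule summable_add)
      show "summable (\<lambda>m. real (Suc m) * (1 / 2) ^ m)"
        using geometric_deriv_sums[of "1/2::real"] by (auto dest: sums_summable)
      show "summable (\<lambda>m. real k * (1 / 2 :: real) ^ m)"
        by (rule summable_mult, rule summable_geometric) auto
    qed
    show "\<exists>N. \<forall>n\<ge>N. norm (norm (complex_of_real (c (n + k)) * K ^ n))
        \<le> C * R ^ k * (real (Suc n) * (1 / 2) ^ n + real k * (1 / 2) ^ n)"
    proof (intro exI allI impI)
      fix n :: nat
      have "norm (norm (complex_of_real (c (n + k)) * K ^ n)) = \<bar>c (n+k)\<bar> * (1/(2*R))^n"
        using Rpos by (simp add: nK norm_mult norm_power)
      also have "\<dots> \<le> C * real (Suc (n+k)) * R^(n+k) * (1/(2*R))^n"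
        by (intro mult_right_mono bnd) (use Rpos in auto)
      also have "\<dots> = C * R ^ k * (real (Suc n) * (1 / 2) ^ n + real k * (1 / 2) ^ n)"
        using Rpos by (simp add: power_add power_divide field_simps)
      finally show "norm (norm (complex_of_real (c (n + k)) * K ^ n))
        \<le> C * R ^ k * (real (Suc n) * (1 / 2) ^ n + real k * (1 / 2) ^ n)" .
    qed
  qed
  have cont: "isCont F 0"
    unfolding F_def by (rule isCont_powser[OF summK]) (use Rpos in \<open>simp add: nK\<close>)
  have F0: "F 0 = complex_of_real (c k)" unfolding F_def by simp
  have Fz: "F (\<i> * complex_of_real s) = 0" if s: "0 < s" "s \<le> \<delta>" for s
  proof -
    define t where "t = \<i> * complex_of_real s"
    have t0: "t \<noteq> 0" using s by (simp add: t_def)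
    have "(\<lambda>n. complex_of_real (c n) * t ^ Suc n) sums 0" using sums[OF s] by (simp add: t_def)
    then have "(\<lambda>i. complex_of_real (c (i + k)) * t ^ Suc (i + k)) sums 0"
      using sums_zero_iff_shift[of k "\<lambda>n. complex_of_real (c n) * t ^ Suc n" 0] less by simp
    then have "(\<lambda>i. t ^ Suc k * (complex_of_real (c (i + k)) * t ^ i)) sums (t ^ Suc k * 0)"
      by (simp add: power_add mult_ac)
    then have "(\<lambda>i. complex_of_real (c (i + k)) * t ^ i) sums 0"
      by (subst (asm) sums_mult_iff) (use t0 in auto)
    then show ?thesis unfolding F_def t_def[symmetric] by (simp add: sums_iff)
  qed
  have lim1: "((\<lambda>s. F (\<i> * complex_of_real s)) \<longlongrightarrow> F 0) (at_right 0)"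
  proof (rule isCont_tendsto_compose[OF cont])
    show "((\<lambda>s. \<i> * complex_of_real s) \<longlongrightarrow> 0) (at_right 0)"
      by (intro tendsto_eq_intros) (auto intro: tendsto_ident_at)
  qed
  have ev: "eventually (\<lambda>s. F (\<i> * complex_of_real s) = 0) (at_right (0::real))"
    unfolding eventually_at_right_field using \<delta> by (intro exI[of _ \<delta>]) (auto intro!: Fz)
  have lim2: "((\<lambda>s. F (\<i> * complex_of_real s)) \<longlongrightarrow> 0) (at_right 0)"
    using tendsto_eventually[OF ev] .
  have "F 0 = 0" using tendsto_unique[OF _ lim1 lim2] by simp
  then show ?case using F0 by simp
qed



lemma (in prob_space) integrable_bnd:
  fixes g :: "'a \<Rightarrow> 'b::{banach,second_countable_topology}"
  assumes "g \<in> borel_measurable M" "AE x in M. norm (g x) \<le> B"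
  shows "integrable M g"
  using integrable_const_bound assms by blast

lemma (in prob_space) integral_bnd:
  fixes g :: "'a \<Rightarrow> 'b::{banach,second_countable_topology}"
  assumes "g \<in> borel_measurable M" "AE x in M. norm (g x) \<le> B"
  shows "norm (integral\<^sup>L M g) \<le> B"
proof -
  have i: "integrable M g" using integrable_bnd[OF assms] .
  have "norm (integral\<^sup>L M g) \<le> (\<integral>x. norm (g x) \<partial>M)" by (rule integral_norm_bound)
  also have "\<dots> \<le> (\<integral>x. B \<partial>M)"
    by (rule integral_mono_AE) (use i assms in auto)
  also have "\<dots> = B" by (simp add: prob_space)
  finally show ?thesis .
qed

locale LL = pair_prob_space Nu Mu for Nu Mu :: "real measure" +
  fixes R \<beta> \<gamma> :: real
  assumes setsN: "sets Nu = sets borel" and setsM: "sets Mu = sets borel"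
    and R1: "R \<ge> 1" and gam: "\<gamma> > 0"
    and suppN: "AE x in Nu. \<bar>x\<bar> \<le> R" and suppM: "AE x in Mu. \<bar>x\<bar> \<le> R"
begin

abbreviation "P \<equiv> Nu \<Otimes>\<^sub>M Mu"

lemma setsP: "sets P = sets (borel \<Otimes>\<^sub>M (borel :: real measure))"
    by (rule sets_pair_measure_cong[OF setsN setsM])

lemmas measM = measurable_cong_sets[OF setsM refl]
lemmas measN = measurable_cong_sets[OF setsN refl]
lemmas measP = measurable_cong_sets[OF setsP refl]

lemma suppP: "AE p in P. \<bar>fst p\<bar> \<le> R \<and> \<bar>snd p\<bar> \<le> R"
proof (rule AE_pair_measure)
  have "(\<lambda>p::real\<times>real. \<bar>fst p\<bar> \<le> R \<and> \<bar>snd p\<bar> \<le> R) \<in> measurable P (count_space UNIV)"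
    unfolding measP by measurable
  then show "{x \<in> space P. \<bar>fst x\<bar> \<le> R \<and> \<bar>snd x\<bar> \<le> R} \<in> sets P"
    by (simp add: pred_def)
  show "AE x in Nu. AE y in Mu. \<bar>fst (x, y)\<bar> \<le> R \<and> \<bar>snd (x, y)\<bar> \<le> R"
    using suppN
  proof eventually_elim
    case (elim x)
    show ?case using suppM by eventually_elim (use elim in simp)
  qed
qed

lemma intM:
  fixes g :: "real \<Rightarrow> 'b::{banach,second_countable_topology}"
  assumes "g \<in> borel_measurable borel" "\<And>x. \<bar>x\<bar> \<le> R \<Longrightarrow> norm (g x) \<le> B"
  shows "integrable Mu g" "norm (integral\<^sup>L Mu g) \<le> B"
proof -
  have m: "g \<in> borel_measurable Mu" using assms(1) measM by blast
  have ae: "AE x in Mu. norm (g x) \<le> B" using suppM by eventually_elim (use assms in auto)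
  show "integrable Mu g" by (rule M2.integrable_bnd[OF m ae])
  show "norm (integral\<^sup>L Mu g) \<le> B" by (rule M2.integral_bnd[OF m ae])
qed

lemma intN:
  fixes g :: "real \<Rightarrow> 'b::{banach,second_countable_topology}"
  assumes "g \<in> borel_measurable borel" "\<And>x. \<bar>x\<bar> \<le> R \<Longrightarrow> norm (g x) \<le> B"
  shows "integrable Nu g" "norm (integral\<^sup>L Nu g) \<le> B"
proof -
  have m: "g \<in> borel_measurable Nu" using assms(1) measN by blast
  have ae: "AE x in Nu. norm (g x) \<le> B" using suppN by eventually_elim (use assms in auto)
  show "integrable Nu g" by (rule M1.integrable_bnd[OF m ae])
  show "norm (integral\<^sup>L Nu g) \<le> B" by (rule M1.integral_bnd[OF m ae])
qed

lemma intP: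
  fixes g :: "real \<times> real \<Rightarrow> 'b::{banach,second_countable_topology}"
  assumes "g \<in> borel_measurable (borel \<Otimes>\<^sub>M borel)" "\<And>x y. \<bar>x\<bar> \<le> R \<Longrightarrow> \<bar>y\<bar> \<le> R \<Longrightarrow> norm (g (x, y)) \<le> B"
  shows "integrable P g" "norm (integral\<^sup>L P g) \<le> B"
proof -
  have m: "g \<in> borel_measurable P" using assms(1) measP by blast
  have ae: "AE p in P. norm (g p) \<le> B" using suppP by eventually_elim (use assms in auto)
  show "integrable P g" by (rule P.integrable_bnd[OF m ae])
  show "norm (integral\<^sup>L P g) \<le> B" by (rule P.integral_bnd[OF m ae])
qed

end


definition C1pair :: "(real\<Rightarrow>real) \<Rightarrow> (real\<Rightarrow>real) \<Rightarrow> bool" where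
  "C1pair f f' \<longleftrightarrow> (\<forall>x. (f has_real_derivative f' x) (at x)) \<and> continuous_on UNIV f'"

lemma C1pair_cont: "C1pair f f' \<Longrightarrow> continuous_on UNIV f"
  unfolding C1pair_def by (meson DERIV_isCont continuous_at_imp_continuous_on)

lemma cont_bound:
  fixes h :: "real \<Rightarrow> real"
  assumes "continuous_on UNIV h"
  shows "\<exists>B. \<forall>x. \<bar>x\<bar> \<le> R \<longrightarrow> \<bar>h x\<bar> \<le> B"
proof -
  have "compact (h ` {-R..R})"
    by (rule compact_continuous_image[OF continuous_on_subset[OF assms] compact_Icc]) auto
  then obtain B where "\<forall>y\<in>h ` {-R..R}. norm y \<le> B"
    using compact_imp_bounded bounded_iff by metis
  then show ?thesis by (intro exI[of _ B]) (auto simp: abs_le_iff)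
qed

lemma dd_meas:
  assumes "C1pair f f'"
  shows "(\<lambda>p. dd f f' (fst p) (snd p)) \<in> borel_measurable (borel \<Otimes>\<^sub>M borel)"
proof -
  have [measurable]: "f \<in> borel_measurable borel"
    using C1pair_cont[OF assms] by (rule borel_measurable_continuous_onI)
  have [measurable]: "f' \<in> borel_measurable borel"
    using assms unfolding C1pair_def by (auto intro: borel_measurable_continuous_onI)
  show ?thesis unfolding dd_def by measurable
qed

context LL begin

definition Lam :: "(real\<Rightarrow>real) \<Rightarrow> (real\<Rightarrow>real) \<Rightarrow> real" where
  "Lam f f' = (\<integral>p. dd f f' (fst p) (snd p) \<partial>P) - (1/\<gamma>) * (\<integral>x. (x - \<beta>) * f x \<partial>Mu)"

lemma ints:
  assumes "C1pair f f'"
  shows "integrable P (\<lambda>p. dd f f' (fst p) (snd p))" "integrable Mu (\<lambda>x. (x - \<beta>) * f x)"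
proof -
  obtain B where B: "\<And>x. \<bar>x\<bar> \<le> R \<Longrightarrow> \<bar>f' x\<bar> \<le> B"
    using cont_bound[of f'] assms unfolding C1pair_def by blast
  obtain B2 where B2: "\<And>x. \<bar>x\<bar> \<le> R \<Longrightarrow> \<bar>f x\<bar> \<le> B2"
    using cont_bound[OF C1pair_cont[OF assms]] by blast
  have der: "\<And>x. (f has_real_derivative f' x) (at x)" using assms unfolding C1pair_def by blast
  show "integrable P (\<lambda>p. dd f f' (fst p) (snd p))"
  proof (rule intP(1)[OF dd_meas[OF assms]])
    fix x y :: real assume "\<bar>x\<bar> \<le> R" "\<bar>y\<bar> \<le> R"
    then show "norm (dd f f' (fst (x, y)) (snd (x, y))) \<le> B"
      using dd_bound[OF der, of "-R" R B x y] B by auto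
  qed
  have [measurable]: "f \<in> borel_measurable borel"
    using C1pair_cont[OF assms] by (rule borel_measurable_continuous_onI)
  show "integrable Mu (\<lambda>x. (x - \<beta>) * f x)"
  proof (rule intM(1))
    show "(\<lambda>x. (x - \<beta>) * f x) \<in> borel_measurable borel" by measurable
    fix x :: real assume x: "\<bar>x\<bar> \<le> R"
    have "\<bar>x - \<beta>\<bar> \<le> R + \<bar>\<beta>\<bar>" using x by linarith
    then show "norm ((x - \<beta>) * f x) \<le> (R + \<bar>\<beta>\<bar>) * B2"
      unfolding real_norm_def abs_mult by (intro mult_mono B2 x) auto
  qed
qed

lemma C1pair_sum:
  assumes "finite I" "\<And>i. i \<in> I \<Longrightarrow> C1pair (f i) (f' i)"
  shows "C1pair (\<lambda>x. \<Sum>i\<in>I. a i * f i x) (\<lambda>x. \<Sum>i\<in>I. a i * f' i x)"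
  using assms unfolding C1pair_def
  by (auto intro!: DERIV_sum DERIV_cmult continuous_intros)

lemma C1pair_diff:
  assumes "C1pair f f'" "C1pair g g'"
  shows "C1pair (\<lambda>x. f x - g x) (\<lambda>x. f' x - g' x)"
  using assms unfolding C1pair_def
  by (auto intro!: DERIV_diff continuous_intros)

lemma Lam_sum:
  assumes I: "finite I" and C: "\<And>i. i \<in> I \<Longrightarrow> C1pair (f i) (f' i)"
  shows "Lam (\<lambda>x. \<Sum>i\<in>I. a i * f i x) (\<lambda>x. \<Sum>i\<in>I. a i * f' i x) = (\<Sum>i\<in>I. a i * Lam (f i) (f' i))"
proof -
  have dd: "dd (\<lambda>x. \<Sum>i\<in>I. a i * f i x) (\<lambda>x. \<Sum>i\<in>I. a i * f' i x) u v
      = (\<Sum>i\<in>I. a i * dd (f i) (f' i) u v)" for u v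
    unfolding dd_def by (auto simp: sum_divide_distrib[symmetric] sum_subtractf[symmetric] algebra_simps)
  have 1: "(\<integral>p. dd (\<lambda>x. \<Sum>i\<in>I. a i * f i x) (\<lambda>x. \<Sum>i\<in>I. a i * f' i x) (fst p) (snd p) \<partial>P)
      = (\<Sum>i\<in>I. a i * (\<integral>p. dd (f i) (f' i) (fst p) (snd p) \<partial>P))"
    unfolding dd by (subst Bochner_Integration.integral_sum) (auto intro!: ints C)
  have 2: "(\<integral>x. (x - \<beta>) * (\<Sum>i\<in>I. a i * f i x) \<partial>Mu) = (\<Sum>i\<in>I. a i * (\<integral>x. (x - \<beta>) * f i x \<partial>Mu))"
    by (simp add: sum_distrib_left mult.left_commute, subst Bochner_Integration.integral_sum) (auto intro!: ints C)
  show ?thesis unfolding Lam_def 1 2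
    by (simp add: sum_subtractf[symmetric] sum_distrib_left algebra_simps)
qed

lemma Lam_diff:
  assumes "C1pair f f'" "C1pair g g'"
  shows "Lam (\<lambda>x. f x - g x) (\<lambda>x. f' x - g' x) = Lam f f' - Lam g g'"
proof -
  have dd: "dd (\<lambda>x. f x - g x) (\<lambda>x. f' x - g' x) u v = dd f f' u v - dd g g' u v" for u v
    unfolding dd_def by (auto simp: diff_divide_distrib)
  have e: "(\<lambda>x. (x - \<beta>) * (f x - g x)) = (\<lambda>x. (x - \<beta>) * f x - (x - \<beta>) * g x)"
    by (simp add: algebra_simps)
  have i1: "(\<integral>p. dd f f' (fst p) (snd p) - dd g g' (fst p) (snd p) \<partial>P)
     = (\<integral>p. dd f f' (fst p) (snd p) \<partial>P) - (\<integral>p. dd g g' (fst p) (snd p) \<partial>P)"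
    using ints[OF assms(1)] ints[OF assms(2)] by (rule_tac Bochner_Integration.integral_diff) auto
  have i2: "(\<integral>x. (x - \<beta>) * f x - (x - \<beta>) * g x \<partial>Mu)
     = (\<integral>x. (x - \<beta>) * f x \<partial>Mu) - (\<integral>x. (x - \<beta>) * g x \<partial>Mu)"
    using ints[OF assms(1)] ints[OF assms(2)] by (rule_tac Bochner_Integration.integral_diff) auto
  show ?thesis unfolding Lam_def dd e i1 i2
    by (simp add: algebra_simps)
qed

lemma Lam_bound:
  assumes C: "C1pair g g'" and e: "\<And>t. \<bar>t\<bar> \<le> R \<Longrightarrow> \<bar>g' t\<bar> \<le> e" and g0: "g (-R) = 0"
  shows "\<bar>Lam g g'\<bar> \<le> e + (1/\<gamma>) * ((R + \<bar>\<beta>\<bar>) * (e * (2 * R)))"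
proof -
  have der: "\<And>x. (g has_real_derivative g' x) (at x)" using C unfolding C1pair_def by blast
  have [measurable]: "g \<in> borel_measurable borel"
    using C1pair_cont[OF C] by (rule borel_measurable_continuous_onI)
  have e': "\<And>t. -R \<le> t \<Longrightarrow> t \<le> R \<Longrightarrow> \<bar>g' t\<bar> \<le> e" using e by auto
  have b1: "norm (\<integral>p. dd g g' (fst p) (snd p) \<partial>P) \<le> e"
  proof (rule intP(2)[OF dd_meas[OF C]])
    fix x y :: real assume "\<bar>x\<bar> \<le> R" "\<bar>y\<bar> \<le> R"
    then show "norm (dd g g' (fst (x, y)) (snd (x, y))) \<le> e"
      using dd_bound[of g g' "-R" R e x y, OF der e'] by auto
  qed
  have b2: "norm (\<integral>x. (x - \<beta>) * g x \<partial>Mu) \<le> (R + \<bar>\<beta>\<bar>) * (e * (2 * R))"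
  proof (rule intM(2))
    show "(\<lambda>x. (x - \<beta>) * g x) \<in> borel_measurable borel" by measurable
    fix x :: real assume x: "\<bar>x\<bar> \<le> R"
    have "\<bar>x - \<beta>\<bar> \<le> R + \<bar>\<beta>\<bar>" using x by linarith
    moreover have "\<bar>g x\<bar> \<le> e * (R - (-R))"
      using diff_bound[of g g' "-R" R e x, OF der e'] x g0 by auto
    ultimately show "norm ((x - \<beta>) * g x) \<le> (R + \<bar>\<beta>\<bar>) * (e * (2 * R))"
      unfolding real_norm_def abs_mult by (intro mult_mono) auto
  qed
  have "\<bar>Lam g g'\<bar> \<le> \<bar>\<integral>p. dd g g' (fst p) (snd p) \<partial>P\<bar> + (1/\<gamma>) * \<bar>\<integral>x. (x - \<beta>) * g x \<partial>Mu\<bar>"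
    unfolding Lam_def using gam
      abs_triangle_ineq4[of "\<integral>p. dd g g' (fst p) (snd p) \<partial>P" "(\<integral>x. (x - \<beta>) * g x \<partial>Mu) / \<gamma>"]
    by (simp add: abs_mult abs_divide)
  also have "\<dots> \<le> e + (1/\<gamma>) * ((R + \<bar>\<beta>\<bar>) * (e * (2 * R)))"
    using b1 b2 gam by (intro add_mono mult_left_mono) auto
  finally show ?thesis .
qed

end


lemma C1pair_pow: "C1pair (\<lambda>x. x ^ n) (\<lambda>x. real n * x ^ (n - 1))"
  unfolding C1pair_def using DERIV_pow[of n] by (auto intro!: continuous_intros)

context LL begin

lemma Lam_poly:
  assumes Z: "\<And>n. Lam (\<lambda>x. x ^ n) (\<lambda>x. real n * x ^ (n - 1)) = 0" and I: "finite I"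
  shows "Lam (\<lambda>x. \<Sum>i\<in>I. b i * x ^ k i) (\<lambda>x. \<Sum>i\<in>I. b i * (real (k i) * x ^ (k i - 1))) = 0"
  using Lam_sum[of I "\<lambda>i x. x ^ k i" "\<lambda>i x. real (k i) * x ^ (k i - 1)" b] I C1pair_pow Z by simp

lemma Lam_all:
  assumes Z: "\<And>n. Lam (\<lambda>x. x ^ n) (\<lambda>x. real n * x ^ (n - 1)) = 0" and C: "C1pair f f'"
  shows "Lam f f' = 0"
proof -
  define K where "K = 1 + (1/\<gamma>) * ((R + \<bar>\<beta>\<bar>) * (2 * R))"
  have Kpos: "K > 0" unfolding K_def using gam R1 by (auto intro!: add_pos_nonneg)
  have main: "\<bar>Lam f f'\<bar> \<le> \<epsilon> * K" if \<epsilon>: "\<epsilon> > 0" for \<epsilon>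
  proof -
    have cf': "continuous_on {-R..R} f'" using C unfolding C1pair_def by (auto intro: continuous_on_subset)
    obtain p where p: "real_polynomial_function p" and pe: "\<And>x. x \<in> {-R..R} \<Longrightarrow> \<bar>f' x - p x\<bar> < \<epsilon>"
      using Stone_Weierstrass_real_polynomial_function[OF compact_Icc cf' \<epsilon>] by blast
    obtain a n where pa: "p = (\<lambda>x. \<Sum>i\<le>n. a i * x ^ i)"
      using p unfolding real_polynomial_function_iff_sum by blast
    define b where "b i = a i / real (Suc i)" for i
    define Q1 where "Q1 x = (\<Sum>i\<le>n. b i * x ^ Suc i)" for x
    define Q1' where "Q1' x = (\<Sum>i\<le>n. b i * (real (Suc i) * x ^ (Suc i - 1)))" for x
    define c0 where "c0 = Q1 (-R) - f (-R)"
    define Q2 where "Q2 x = (\<Sum>i\<in>{0::nat}. c0 * x ^ 0)" for x :: real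
    define Q2' where "Q2' x = (\<Sum>i\<in>{0::nat}. c0 * (real 0 * x ^ (0 - 1)))" for x :: real
    have Q1'p: "Q1' x = p x" for x
      unfolding Q1'_def pa b_def by (intro sum.cong) auto
    have Q2'0: "Q2' x = 0" for x unfolding Q2'_def by simp
    have L1: "Lam Q1 Q1' = 0" unfolding Q1_def[abs_def] Q1'_def[abs_def]
      using Lam_poly[OF Z, of "{..n}" b Suc] by simp
    have L2: "Lam Q2 Q2' = 0" unfolding Q2_def[abs_def] Q2'_def[abs_def]
      using Lam_poly[OF Z, of "{0}" "\<lambda>_. c0" "\<lambda>_. 0"] by simp
    have C1: "C1pair Q1 Q1'" unfolding Q1_def[abs_def] Q1'_def[abs_def]
      by (rule C1pair_sum[of "{..n}" "\<lambda>i x. x ^ Suc i" "\<lambda>i x. real (Suc i) * x ^ (Suc i - 1)" b])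
         (simp, rule C1pair_pow)
    have C2: "C1pair Q2 Q2'" unfolding Q2_def[abs_def] Q2'_def[abs_def]
      by (rule C1pair_sum[of "{0}" "\<lambda>i x. x ^ 0" "\<lambda>i x. real 0 * x ^ (0 - 1)" "\<lambda>_. c0"])
         (simp, rule C1pair_pow)
    have CQ: "C1pair (\<lambda>x. Q1 x - Q2 x) (\<lambda>x. Q1' x - Q2' x)" by (rule C1pair_diff[OF C1 C2])
    have LQ: "Lam (\<lambda>x. Q1 x - Q2 x) (\<lambda>x. Q1' x - Q2' x) = 0" using Lam_diff[OF C1 C2] L1 L2 by simp
    have CG: "C1pair (\<lambda>x. f x - (Q1 x - Q2 x)) (\<lambda>x. f' x - (Q1' x - Q2' x))"
      by (rule C1pair_diff[OF C CQ])
    have LG: "Lam (\<lambda>x. f x - (Q1 x - Q2 x)) (\<lambda>x. f' x - (Q1' x - Q2' x)) = Lam f f'"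
      using Lam_diff[OF C CQ] LQ by simp
    have g0: "f (-R) - (Q1 (-R) - Q2 (-R)) = 0" unfolding Q2_def c0_def by simp
    have ge: "\<bar>f' t - (Q1' t - Q2' t)\<bar> \<le> \<epsilon>" if "\<bar>t\<bar> \<le> R" for t
      using pe[of t] that Q1'p Q2'0 by (auto simp: abs_le_iff)
    have "\<bar>Lam f f'\<bar> \<le> \<epsilon> + (1/\<gamma>) * ((R + \<bar>\<beta>\<bar>) * (\<epsilon> * (2 * R)))"
      using Lam_bound[OF CG ge g0] LG by simp
    also have "\<dots> = \<epsilon> * K" unfolding K_def by (simp add: algebra_simps)
    finally show ?thesis .
  qed
  show ?thesis
  proof (rule ccontr)
    assume ne: "Lam f f' \<noteq> 0"
    have "\<bar>Lam f f'\<bar> \<le> (\<bar>Lam f f'\<bar> / (2 * K)) * K" using main[of "\<bar>Lam f f'\<bar> / (2 * K)"] ne Kpos by simp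
    also have "\<dots> = \<bar>Lam f f'\<bar> / 2" using Kpos by simp
    finally show False using ne by simp
  qed
qed

end


definition gz :: "complex \<Rightarrow> real \<Rightarrow> complex" where
  "gz z x = 1 / (z - complex_of_real x)"

lemma gz_ne: "Im z \<noteq> 0 \<Longrightarrow> z - complex_of_real x \<noteq> 0"
  by (metis Im_complex_of_real eq_iff_diff_eq_0)

lemma gz_norm: assumes "Im z \<noteq> 0" shows "norm (gz z x) \<le> 1 / \<bar>Im z\<bar>"
proof -
  have "\<bar>Im z\<bar> \<le> cmod (z - complex_of_real x)" using abs_Im_le_cmod[of "z - complex_of_real x"] by simp
  then show ?thesis using assms unfolding gz_def by (simp add: norm_divide frac_le)
qed

lemma gz_cont: "Im z \<noteq> 0 \<Longrightarrow> continuous_on UNIV (gz z)"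
  unfolding gz_def using gz_ne by (auto intro!: continuous_intros)

lemma gz_meas: "Im z \<noteq> 0 \<Longrightarrow> gz z \<in> borel_measurable borel"
  by (rule borel_measurable_continuous_onI[OF gz_cont])

lemma gz_deriv:
  assumes "Im z \<noteq> 0"
  shows "(gz z has_vector_derivative (gz z x)^2) (at x)"
proof -
  have ne: "z - complex_of_real x \<noteq> 0" using gz_ne[OF assms] .
  have "((\<lambda>t. 1 / (z - t)) has_field_derivative (1 / (z - complex_of_real x))^2) (at (complex_of_real x))"
    by (rule derivative_eq_intros refl | use ne in \<open>simp add: field_simps power2_eq_square\<close>)+
  then show ?thesis unfolding gz_def by (rule has_vector_derivative_real_field)
qed

lemma C1_Re: "Im z \<noteq> 0 \<Longrightarrow> C1pair (\<lambda>x. Re (gz z x)) (\<lambda>x. Re ((gz z x)^2))"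
  unfolding C1pair_def
  using gz_deriv gz_cont
  by (auto intro!: has_field_derivative_Re continuous_intros)

lemma C1_Im: "Im z \<noteq> 0 \<Longrightarrow> C1pair (\<lambda>x. Im (gz z x)) (\<lambda>x. Im ((gz z x)^2))"
  unfolding C1pair_def
  using gz_deriv gz_cont
  by (auto intro!: has_field_derivative_Im continuous_intros)

lemma gz_diff:
  assumes "Im z \<noteq> 0" "x \<noteq> y"
  shows "(gz z x - gz z y) / complex_of_real (x - y) = gz z x * gz z y"
proof -
  have n1: "z - complex_of_real x \<noteq> 0" "z - complex_of_real y \<noteq> 0" using gz_ne[OF assms(1)] by auto
  have n2: "complex_of_real (x - y) \<noteq> 0" using assms(2) by simp
  have gen: "(1/a - 1/b) / (b - a) = 1/a * (1/b)" if "a \<noteq> 0" "b \<noteq> 0" "b - a \<noteq> 0" for a b :: complex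
    using that by (simp add: field_simps)
  have e: "complex_of_real (x - y) = (z - complex_of_real y) - (z - complex_of_real x)" by simp
  show ?thesis unfolding gz_def e using n1 n2 e by (intro gen) auto
qed

lemma dd_Re: assumes z: "Im z \<noteq> 0"
  shows "dd (\<lambda>x. Re (gz z x)) (\<lambda>x. Re ((gz z x)^2)) x y = Re (gz z x * gz z y)"
proof (cases "x = y")
  case True then show ?thesis by (simp add: dd_def power2_eq_square)
next
  case False
  have "Re (gz z x * gz z y) = Re ((gz z x - gz z y) / complex_of_real (x - y))"
    by (simp only: gz_diff[OF z False])
  also have "\<dots> = (Re (gz z x) - Re (gz z y)) / (x - y)" by (simp del: of_real_diff)
  finally show ?thesis using False by (simp add: dd_def)
qed

lemma dd_Im: assumes z: "Im z \<noteq> 0"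
  shows "dd (\<lambda>x. Im (gz z x)) (\<lambda>x. Im ((gz z x)^2)) x y = Im (gz z x * gz z y)"
proof (cases "x = y")
  case True then show ?thesis by (simp add: dd_def power2_eq_square)
next
  case False
  have "Im (gz z x * gz z y) = Im ((gz z x - gz z y) / complex_of_real (x - y))"
    by (simp only: gz_diff[OF z False])
  also have "\<dots> = (Im (gz z x) - Im (gz z y)) / (x - y)" by (simp del: of_real_diff)
  finally show ?thesis using False by (simp add: dd_def)
qed

lemma GM: "cauchy_transform M' z = (\<integral>x. gz z x \<partial>M')"
  by (simp add: cauchy_transform_def gz_def)

context LL begin

lemma int_h:
  assumes z: "Im z \<noteq> 0"
  shows "integrable P (\<lambda>(x, y). gz z x * gz z y)"
proof -
  have [measurable]: "gz z \<in> borel_measurable borel" by (rule gz_meas[OF z])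
  show ?thesis
  proof (rule intP(1))
    show "(\<lambda>(x, y). gz z x * gz z y) \<in> borel_measurable (borel \<Otimes>\<^sub>M borel)" by measurable
    fix x y :: real
    show "norm ((\<lambda>(x, y). gz z x * gz z y) (x, y)) \<le> 1 / \<bar>Im z\<bar> * (1 / \<bar>Im z\<bar>)"
      unfolding case_prod_conv norm_mult by (intro mult_mono gz_norm z) auto
  qed
qed

lemma int_h':
  assumes z: "Im z \<noteq> 0"
  shows "integrable P (\<lambda>p. gz z (fst p) * gz z (snd p))"
proof -
  have e: "(\<lambda>p. gz z (fst p) * gz z (snd p)) = (\<lambda>(x, y). gz z x * gz z y)" by auto
  show ?thesis unfolding e by (rule int_h[OF z])
qed

lemma int_g2:
  assumes z: "Im z \<noteq> 0"
  shows "integrable Mu (\<lambda>x. complex_of_real (x - \<beta>) * gz z x)"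
proof -
  have [measurable]: "gz z \<in> borel_measurable borel" by (rule gz_meas[OF z])
  show ?thesis
  proof (rule intM(1))
    show "(\<lambda>x. complex_of_real (x - \<beta>) * gz z x) \<in> borel_measurable borel" by measurable
    fix x :: real assume x: "\<bar>x\<bar> \<le> R"
    have "\<bar>x - \<beta>\<bar> \<le> R + \<bar>\<beta>\<bar>" using x by linarith
    then show "norm (complex_of_real (x - \<beta>) * gz z x) \<le> (R + \<bar>\<beta>\<bar>) * (1 / \<bar>Im z\<bar>)"
      unfolding norm_mult norm_of_real by (intro mult_mono gz_norm z) auto
  qed
qed

definition CL :: "complex \<Rightarrow> complex" where
  "CL z = (\<integral>p. gz z (fst p) * gz z (snd p) \<partial>P)
     - complex_of_real (1/\<gamma>) * (\<integral>x. complex_of_real (x - \<beta>) * gz z x \<partial>Mu)"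

lemma int_prod:
  assumes z: "Im z \<noteq> 0"
  shows "(\<integral>p. gz z (fst p) * gz z (snd p) \<partial>P) = cauchy_transform Nu z * cauchy_transform Mu z"
proof -
  have [measurable]: "gz z \<in> borel_measurable borel" by (rule gz_meas[OF z])
  have int: "integrable P (\<lambda>(x, y). gz z x * gz z y)" by (rule int_h[OF z])
  have "(\<integral>p. gz z (fst p) * gz z (snd p) \<partial>P) = (\<integral>p. (\<lambda>(x, y). gz z x * gz z y) p \<partial>P)"
    by (simp add: case_prod_beta)
  also have "\<dots> = (\<integral>x. (\<integral>y. gz z x * gz z y \<partial>Mu) \<partial>Nu)"
    using integral_fst[OF int] by simp
  also have "\<dots> = (\<integral>x. gz z x * cauchy_transform Mu z \<partial>Nu)"
    by (simp only: integral_mult_right_zero GM)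
  also have "\<dots> = cauchy_transform Nu z * cauchy_transform Mu z"
    by (simp only: integral_mult_left_zero GM)
  finally show ?thesis .
qed

lemma gz_int: assumes z: "Im z \<noteq> 0" shows "integrable Mu (gz z)"
  by (rule intM(1)[OF gz_meas[OF z] gz_norm[OF z]])

lemma CL_eq:
  assumes z: "Im z \<noteq> 0"
  shows "CL z = cauchy_transform Nu z * cauchy_transform Mu z
      - complex_of_real (1/\<gamma>) * ((z - complex_of_real \<beta>) * cauchy_transform Mu z - 1)"
proof -
  have e: "complex_of_real (x - \<beta>) * gz z x = (z - complex_of_real \<beta>) * gz z x - 1" for x
    using gz_ne[OF z, of x] unfolding gz_def by (simp add: field_simps)
  have "(\<integral>x. complex_of_real (x - \<beta>) * gz z x \<partial>Mu) = (\<integral>x. (z - complex_of_real \<beta>) * gz z x - 1 \<partial>Mu)"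
    unfolding e ..
  also have "\<dots> = (\<integral>x. (z - complex_of_real \<beta>) * gz z x \<partial>Mu) - (\<integral>x. 1 \<partial>Mu)"
    by (rule Bochner_Integration.integral_diff) (auto intro: gz_int[OF z])
  also have "\<dots> = (z - complex_of_real \<beta>) * cauchy_transform Mu z - 1"
    unfolding integral_mult_right_zero cauchy_transform_def gz_def by (simp add: M2.prob_space)
  finally show ?thesis unfolding CL_def int_prod[OF z] by simp
qed

lemma Lam_Re: assumes z: "Im z \<noteq> 0"
  shows "Lam (\<lambda>x. Re (gz z x)) (\<lambda>x. Re ((gz z x)^2)) = Re (CL z)"
proof -
  have 1: "(\<integral>p. Re (gz z (fst p) * gz z (snd p)) \<partial>P) = Re (\<integral>p. gz z (fst p) * gz z (snd p) \<partial>P)"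
    by (rule integral_Re[OF int_h'[OF z]])
  have e: "(x - \<beta>) * Re (gz z x) = Re (complex_of_real (x - \<beta>) * gz z x)" for x
    by (simp del: of_real_diff)
  have 2: "(\<integral>x. (x - \<beta>) * Re (gz z x) \<partial>Mu) = Re (\<integral>x. complex_of_real (x - \<beta>) * gz z x \<partial>Mu)"
    unfolding e by (rule integral_Re[OF int_g2[OF z]])
  show ?thesis unfolding Lam_def CL_def dd_Re[OF z] 1 2 by (simp del: of_real_diff)
qed

lemma Lam_Im: assumes z: "Im z \<noteq> 0"
  shows "Lam (\<lambda>x. Im (gz z x)) (\<lambda>x. Im ((gz z x)^2)) = Im (CL z)"
proof -
  have 1: "(\<integral>p. Im (gz z (fst p) * gz z (snd p)) \<partial>P) = Im (\<integral>p. gz z (fst p) * gz z (snd p) \<partial>P)"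
    by (rule integral_Im[OF int_h'[OF z]])
  have e: "(x - \<beta>) * Im (gz z x) = Im (complex_of_real (x - \<beta>) * gz z x)" for x
    by (simp del: of_real_diff)
  have 2: "(\<integral>x. (x - \<beta>) * Im (gz z x) \<partial>Mu) = Im (\<integral>x. complex_of_real (x - \<beta>) * gz z x \<partial>Mu)"
    unfolding e by (rule integral_Im[OF int_g2[OF z]])
  show ?thesis unfolding Lam_def CL_def dd_Im[OF z] 1 2 by (simp del: of_real_diff)
qed

end


lemma (in prob_space) sums_integral_bnd:
  fixes f :: "nat \<Rightarrow> 'a \<Rightarrow> 'b::{banach,second_countable_topology}"
  assumes meas: "\<And>n. f n \<in> borel_measurable M" and Smeas: "S \<in> borel_measurable M"
    and bnd: "\<And>n. AE x in M. norm (f n x) \<le> b n" and sb: "summable b"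
    and sums: "AE x in M. (\<lambda>n. f n x) sums S x"
  shows "(\<lambda>n. integral\<^sup>L M (f n)) sums integral\<^sup>L M S"
proof -
  have int: "\<And>n. integrable M (f n)" using integrable_bnd[OF meas bnd] .
  have ae: "AE x in M. \<forall>n. norm (f n x) \<le> b n" using bnd by (simp add: AE_all_countable)
  have s1: "AE x in M. summable (\<lambda>i. norm (f i x))"
    using ae by eventually_elim (auto intro: summable_comparison_test[OF _ sb])
  have s2: "summable (\<lambda>i. \<integral>x. norm (f i x) \<partial>M)"
  proof (rule summable_comparison_test[OF _ sb], intro exI allI impI)
    fix n
    have "norm (\<integral>x. norm (f n x) \<partial>M) \<le> b n"
      by (rule integral_bnd) (use meas bnd in auto)
    then show "norm (\<integral>x. norm (f n x) \<partial>M) \<le> b n" .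
  qed
  have "(\<lambda>n. integral\<^sup>L M (f n)) sums (\<integral>x. (\<Sum>i. f i x) \<partial>M)"
    by (rule sums_integral[OF int s1 s2])
  moreover have "(\<integral>x. (\<Sum>i. f i x) \<partial>M) = integral\<^sup>L M S"
  proof (rule integral_cong_AE)
    show "(\<lambda>x. \<Sum>i. f i x) \<in> borel_measurable M" using meas by measurable
    show "S \<in> borel_measurable M" by (rule Smeas)
    show "AE x in M. (\<Sum>i. f i x) = S x" using sums by eventually_elim (simp add: sums_unique[symmetric])
  qed
  ultimately show ?thesis by simp
qed

lemma l1: fixes w a :: complex assumes "w \<noteq> 0" "1 - w * a \<noteq> 0"
  shows "w * (1 / (1 - w * a)) = 1 / (1 / w - a)"
proof -
  have "1 / w - a = (1 - w * a) / w" using assms by (simp add: field_simps)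
  then show ?thesis using assms by simp
qed
lemma l2: fixes a b c d w :: complex assumes "a - b = c * d" "c \<noteq> 0"
  shows "(a * w - b * w) / c = d * w"
proof -
  have "a * w - b * w = (a - b) * w" by (simp add: algebra_simps)
  then show ?thesis using assms by simp
qed
lemma l3: fixes w a :: complex assumes "w \<noteq> 0" "1 - w * a \<noteq> 0"
  shows "w^2 * (1 / (1 - w * a)^2) = 1 / (1 / w - a) * (1 / (1 / w - a))"
proof -
  have "w^2 * (1 / (1 - w * a)^2) = (w * (1 / (1 - w * a))) * (w * (1 / (1 - w * a)))"
    by (simp add: power2_eq_square)
  also have "\<dots> = 1 / (1 / w - a) * (1 / (1 / w - a))" by (simp only: l1[OF assms])
  finally show ?thesis .
qed
definition Dn :: "nat \<Rightarrow> real \<Rightarrow> real \<Rightarrow> real" where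
  "Dn n x y = (\<Sum>i<n. y ^ (n - Suc i) * x ^ i)"

lemma Dn_diag: "Dn n x x = real n * x ^ (n - 1)"
proof -
  have "Dn n x x = (\<Sum>i<n. x ^ (n - 1))"
    unfolding Dn_def by (intro sum.cong refl) (auto simp: power_add[symmetric])
  then show ?thesis by simp
qed

lemma dd_pow: "dd (\<lambda>x. x ^ n) (\<lambda>x. real n * x ^ (n - 1)) x y = Dn n x y"
proof (cases "x = y")
  case True then show ?thesis by (simp add: dd_def Dn_diag)
next
  case False
  then show ?thesis unfolding dd_def Dn_def using power_diff_sumr2[of x n y] by simp
qed

lemma Dn_bound:
  assumes R: "R \<ge> 1" "\<bar>x\<bar> \<le> R" "\<bar>y\<bar> \<le> R"
  shows "\<bar>Dn n x y\<bar> \<le> real n * R ^ n"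
proof -
  have t: "\<bar>y ^ (n - Suc i) * x ^ i\<bar> \<le> R ^ n" if "i < n" for i
  proof -
    have "\<bar>y ^ (n - Suc i) * x ^ i\<bar> \<le> R ^ (n - Suc i) * R ^ i"
      unfolding abs_mult power_abs using R by (intro mult_mono power_mono) auto
    also have "\<dots> = R ^ (n - Suc i + i)" by (simp add: power_add)
    also have "\<dots> \<le> R ^ n" using R that by (intro power_increasing) auto
    finally show ?thesis .
  qed
  have "\<bar>Dn n x y\<bar> \<le> (\<Sum>i<n. \<bar>y ^ (n - Suc i) * x ^ i\<bar>)" unfolding Dn_def by (rule sum_abs)
  also have "\<dots> \<le> of_nat (card {..<n}) * R ^ n" by (rule sum_bounded_above) (use t in auto)
  finally show ?thesis by simp
qed

lemma g_series:
  assumes x: "\<bar>x\<bar> \<le> R" and R: "R \<ge> 1" and w: "w \<noteq> 0" "norm w \<le> 1 / (2 * R)"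
  shows "(\<lambda>n. complex_of_real (x ^ n) * w ^ Suc n) sums gz (1 / w) x"
proof -
  have "norm (w * complex_of_real x) \<le> 1 / (2 * R) * R"
    unfolding norm_mult norm_of_real using x w R by (intro mult_mono) auto
  also have "\<dots> < 1" using R by simp
  finally have "norm (w * complex_of_real x) < 1" .
  from sums_mult[OF geometric_sums[OF this], of w]
  have "(\<lambda>n. w * (w * complex_of_real x) ^ n) sums (w * (1 / (1 - w * complex_of_real x)))" .
  moreover have "w * (1 / (1 - w * complex_of_real x)) = gz (1 / w) x"
    unfolding gz_def using w \<open>norm (w * complex_of_real x) < 1\<close>
    by (intro l1) auto
  moreover have "w * (w * complex_of_real x) ^ n = complex_of_real (x ^ n) * w ^ Suc n" for n
    by (simp add: power_mult_distrib mult_ac)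
  ultimately show ?thesis by simp
qed

lemma h_series:
  assumes x: "\<bar>x\<bar> \<le> R" and y: "\<bar>y\<bar> \<le> R" and R: "R \<ge> 1" and w: "w \<noteq> 0" "norm w \<le> 1 / (2 * R)"
    and z: "Im (1 / w) \<noteq> 0"
  shows "(\<lambda>n. complex_of_real (Dn n x y) * w ^ Suc n) sums (gz (1 / w) x * gz (1 / w) y)"
proof (cases "x = y")
  case False
  have "(\<lambda>n. complex_of_real (x ^ n) * w ^ Suc n - complex_of_real (y ^ n) * w ^ Suc n) sums
      (gz (1 / w) x - gz (1 / w) y)"
    by (rule sums_diff[OF g_series[OF x R w] g_series[OF y R w]])
  from sums_divide[OF this, of "complex_of_real (x - y)"]
  have "(\<lambda>n. (complex_of_real (x ^ n) * w ^ Suc n - complex_of_real (y ^ n) * w ^ Suc n) / complex_of_real (x - y))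
     sums (gz (1 / w) x * gz (1 / w) y)"
    using gz_diff[OF z False] by simp
  moreover have "(complex_of_real (x ^ n) * w ^ Suc n - complex_of_real (y ^ n) * w ^ Suc n) / complex_of_real (x - y)
      = complex_of_real (Dn n x y) * w ^ Suc n" for n
  proof -
    have "x ^ n - y ^ n = (x - y) * Dn n x y" unfolding Dn_def by (rule power_diff_sumr2)
    then have "complex_of_real (x ^ n) - complex_of_real (y ^ n) = complex_of_real (x - y) * complex_of_real (Dn n x y)"
      by (metis of_real_diff of_real_mult)
    then show ?thesis using False by (intro l2) auto
  qed
  ultimately show ?thesis by simp
next
  case True
  have "norm (w * complex_of_real x) \<le> 1 / (2 * R) * R"
    unfolding norm_mult norm_of_real using x w R by (intro mult_mono) auto
  also have "\<dots> < 1" using R by simp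
  finally have q: "norm (w * complex_of_real x) < 1" .
  from sums_mult[OF geometric_deriv_sums[OF q], of "w^2"]
  have "(\<lambda>n. w^2 * (of_nat (Suc n) * (w * complex_of_real x) ^ n)) sums (w^2 * (1 / (1 - w * complex_of_real x)^2))" .
  moreover have "w^2 * (1 / (1 - w * complex_of_real x)^2) = gz (1 / w) x * gz (1 / w) y"
    unfolding gz_def True[symmetric] using w q
    by (intro l3) auto
  moreover have "w^2 * (of_nat (Suc n) * (w * complex_of_real x) ^ n) = complex_of_real (Dn (Suc n) x y) * w ^ Suc (Suc n)" for n
    unfolding True Dn_diag by (simp add: power_mult_distrib power2_eq_square mult_ac)
  ultimately have "(\<lambda>n. complex_of_real (Dn (Suc n) x y) * w ^ Suc (Suc n)) sums (gz (1 / w) x * gz (1 / w) y)"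
    by simp
  then show ?thesis unfolding sums_Suc_iff[of "\<lambda>n. complex_of_real (Dn n x y) * w ^ Suc n"]
    by (simp add: Dn_def)
qed



lemma alg_fwd:
  fixes a b c z g :: complex
  assumes g: "g \<noteq> 0" and e: "a * b - (1 / g) * ((z - c) * b - 1) = 0"
  shows "b = 1 / (z - c - g * a)"
proof -
  have "g * (a * b - (1 / g) * ((z - c) * b - 1)) = 0" using e by simp
  then have "g * a * b - ((z - c) * b - 1) = 0" using g by (simp add: right_diff_distrib mult.assoc)
  then have "b * (z - c - g * a) = 1" by (simp add: algebra_simps)
  then show ?thesis by (metis divide_self_if mult_eq_0_iff nonzero_mult_div_cancel_right zero_neq_one)
qed

lemma alg_bwd:
  fixes a b c z g :: complex
  assumes g: "g \<noteq> 0" and b0: "b \<noteq> 0" and e: "b = 1 / (z - c - g * a)"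
  shows "a * b - (1 / g) * ((z - c) * b - 1) = 0"
proof -
  have d: "z - c - g * a \<noteq> 0" using b0 e by auto
  then have "b * (z - c - g * a) = 1" using e by simp
  then have "g * a * b - ((z - c) * b - 1) = 0" by (simp add: algebra_simps)
  then have "g * (a * b - (1 / g) * ((z - c) * b - 1)) = 0" using g by (simp add: right_diff_distrib mult.assoc)
  then show ?thesis using g by simp
qed

context LL begin

lemma GM_ne0:
  assumes z: "Im z \<noteq> 0"
  shows "cauchy_transform Mu z \<noteq> 0"
proof -
  define B where "B = (\<bar>Re z\<bar> + R)^2 + (Im z)^2"
  define c where "c = (Im z)^2 / B"
  have Bpos: "B > 0" unfolding B_def using z by (simp add: add_nonneg_pos)
  have [measurable]: "gz z \<in> borel_measurable borel" by (rule gz_meas[OF z])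
  have ImG: "Im (gz z x) = - Im z / ((Re z - x)^2 + (Im z)^2)" for x
    unfolding gz_def by (simp add: Im_divide power2_eq_square)
  have pt: "Im z * Im (gz z x) \<le> - c" if x: "\<bar>x\<bar> \<le> R" for x
  proof -
    define D where "D = (Re z - x)^2 + (Im z)^2"
    have Dpos: "D > 0" unfolding D_def using z by (simp add: add_nonneg_pos)
    have "\<bar>Re z - x\<bar> \<le> \<bar>Re z\<bar> + R" using x by linarith
    then have "(Re z - x)^2 \<le> (\<bar>Re z\<bar> + R)^2"
      by (metis abs_ge_zero power2_abs power_mono)
    then have DB: "D \<le> B" unfolding D_def B_def by simp
    have "Im z * Im (gz z x) = - ((Im z)^2 / D)" unfolding ImG D_def[symmetric]
      by (simp add: power2_eq_square)
    also have "\<dots> \<le> - ((Im z)^2 / B)"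
      using DB Dpos by (intro le_imp_neg_le frac_le) auto
    finally show ?thesis by (simp add: c_def)
  qed
  have intI: "integrable Mu (\<lambda>x. Im z * Im (gz z x))"
    using gz_int[OF z] by auto
  have "Im z * Im (cauchy_transform Mu z) = (\<integral>x. Im z * Im (gz z x) \<partial>Mu)"
    unfolding GM integral_Im[OF gz_int[OF z], symmetric] by simp
  also have "\<dots> \<le> (\<integral>x. - c \<partial>Mu)"
    by (rule integral_mono_AE[OF intI]) (use suppM pt in \<open>auto elim: AE_mp\<close>)
  also have "\<dots> = - c" by (simp add: M2.prob_space)
  also have "\<dots> < 0" using z Bpos by (simp add: c_def)
  finally show ?thesis by auto
qed

lemma CL_series:
  assumes s: "0 < s" "s \<le> 1 / (2 * R)"
  shows "(\<lambda>n. complex_of_real (Lam (\<lambda>x. x ^ n) (\<lambda>x. real n * x ^ (n - 1))) * (\<i> * complex_of_real s) ^ Suc n)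
     sums CL (1 / (\<i> * complex_of_real s))"
proof -
  define w where "w = \<i> * complex_of_real s"
  define z where "z = 1 / w"
  have w0: "w \<noteq> 0" using s by (simp add: w_def)
  have nw: "norm w = s" using s by (simp add: w_def norm_mult)
  have nw2: "norm w \<le> 1 / (2 * R)" using nw s by simp
  have "z = complex_of_real (-1/s) * \<i>" using s by (simp add: z_def w_def field_simps)
  then have z: "Im z \<noteq> 0" using s by simp
  have s1: "s \<le> 1" using s R1 by (smt (verit) frac_le le_divide_eq_1_pos)
  have Rs: "R * s \<le> 1/2" using s R1 by (simp add: field_simps)
  have Rs2: "(R * s) ^ n \<le> (1/2) ^ n" for n using Rs s R1 by (intro power_mono) auto
  define K where "K = 1 + R + \<bar>\<beta>\<bar>"
  define b where "b n = K * (real (Suc n) * (1/2) ^ n)" for n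
  have sb: "summable b" unfolding b_def
    by (rule summable_mult) (use geometric_deriv_sums[of "1/2::real"] in \<open>auto dest: sums_summable\<close>)
  have [measurable]: "gz z \<in> borel_measurable borel" by (rule gz_meas[OF z])
  have [measurable]: "(\<lambda>p. Dn n (fst p) (snd p)) \<in> borel_measurable (borel \<Otimes>\<^sub>M borel)" for n
    unfolding Dn_def by measurable
  have S1: "(\<lambda>n. complex_of_real (\<integral>p. Dn n (fst p) (snd p) \<partial>P) * w ^ Suc n)
      sums (\<integral>p. gz z (fst p) * gz z (snd p) \<partial>P)"
  proof -
    have "(\<lambda>n. \<integral>p. complex_of_real (Dn n (fst p) (snd p)) * w ^ Suc n \<partial>P)
        sums (\<integral>p. gz z (fst p) * gz z (snd p) \<partial>P)"
    proof (rule P.sums_integral_bnd[where b=b])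
      show "(\<lambda>p. complex_of_real (Dn n (fst p) (snd p)) * w ^ Suc n) \<in> borel_measurable P" for n
        unfolding measP by measurable
      show "(\<lambda>p. gz z (fst p) * gz z (snd p)) \<in> borel_measurable P"
        unfolding measP by measurable
      show "summable b" by (rule sb)
      show "AE p in P. norm (complex_of_real (Dn n (fst p) (snd p)) * w ^ Suc n) \<le> b n" for n
        using suppP
      proof eventually_elim
        case (elim p)
        have "norm (complex_of_real (Dn n (fst p) (snd p)) * w ^ Suc n) = \<bar>Dn n (fst p) (snd p)\<bar> * (s ^ n * s)"
          by (simp add: norm_mult norm_power nw)
        also have "\<dots> \<le> (real n * R ^ n) * ((1/2)^n / R ^ n * 1)"
        proof (intro mult_mono Dn_bound R1)
          show "s ^ n \<le> (1/2) ^ n / R ^ n" using Rs2[of n] R1 by (simp add: field_simps power_mult_distrib)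
        qed (use elim s1 s in auto)
        also have "\<dots> = real n * (1/2) ^ n" using R1 by simp
        also have "\<dots> \<le> b n"
        proof -
          have h1: "real n * (1/2::real)^n \<le> real (Suc n) * (1/2)^n" by (intro mult_right_mono) auto
          have h2: "0 \<le> real (Suc n) * (1/2::real)^n" by simp
          have K1: "1 \<le> K" unfolding K_def using R1 by simp
          show ?thesis using h1 mult_right_mono[OF K1 h2] unfolding b_def by linarith
        qed
        finally show ?case .
      qed
      show "AE p in P. (\<lambda>n. complex_of_real (Dn n (fst p) (snd p)) * w ^ Suc n) sums (gz z (fst p) * gz z (snd p))"
        using suppP by eventually_elim (use h_series R1 w0 nw2 z in \<open>auto simp: z_def\<close>)
    qed
    then show ?thesis by simp
  qed
  have S2: "(\<lambda>n. complex_of_real (\<integral>x. (x - \<beta>) * x ^ n \<partial>Mu) * w ^ Suc n)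
      sums (\<integral>x. complex_of_real (x - \<beta>) * gz z x \<partial>Mu)"
  proof -
    have "(\<lambda>n. \<integral>x. complex_of_real ((x - \<beta>) * x ^ n) * w ^ Suc n \<partial>Mu)
        sums (\<integral>x. complex_of_real (x - \<beta>) * gz z x \<partial>Mu)"
    proof (rule M2.sums_integral_bnd[where b=b])
      show "(\<lambda>x. complex_of_real ((x - \<beta>) * x ^ n) * w ^ Suc n) \<in> borel_measurable Mu" for n
        unfolding measM by measurable
      show "(\<lambda>x. complex_of_real (x - \<beta>) * gz z x) \<in> borel_measurable Mu"
        unfolding measM by measurable
      show "summable b" by (rule sb)
      show "AE x in Mu. norm (complex_of_real ((x - \<beta>) * x ^ n) * w ^ Suc n) \<le> b n" for n
        using suppM
      proof eventually_elim
        case (elim x)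
        have "norm (complex_of_real ((x - \<beta>) * x ^ n) * w ^ Suc n) = \<bar>x - \<beta>\<bar> * (\<bar>x\<bar> ^ n * s ^ n) * s"
          by (simp add: norm_mult norm_power nw abs_mult power_abs del: of_real_diff)
        also have "\<dots> \<le> (R + \<bar>\<beta>\<bar>) * (1/2) ^ n * 1"
        proof (intro mult_mono)
          show "\<bar>x - \<beta>\<bar> \<le> R + \<bar>\<beta>\<bar>" using elim by linarith
          have "\<bar>x\<bar> ^ n * s ^ n \<le> R ^ n * s ^ n" using elim s by (intro mult_right_mono power_mono) auto
          also have "\<dots> \<le> (1/2) ^ n" using Rs2[of n] by (simp add: power_mult_distrib)
          finally show "\<bar>x\<bar> ^ n * s ^ n \<le> (1/2) ^ n" .
        qed (use s1 s R1 in auto)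
        also have "\<dots> \<le> b n"
        proof -
          have h1: "(R + \<bar>\<beta>\<bar>) \<le> K * real (Suc n)" unfolding K_def using R1
            by (smt (verit) of_nat_0_le_iff mult_le_cancel_left1 of_nat_Suc)
          show ?thesis unfolding b_def using mult_right_mono[OF h1, of "(1/2)^n"] by (simp add: mult_ac)
        qed
        finally show ?case .
      qed
      show "AE x in Mu. (\<lambda>n. complex_of_real ((x - \<beta>) * x ^ n) * w ^ Suc n) sums (complex_of_real (x - \<beta>) * gz z x)"
        using suppM
      proof eventually_elim
        case (elim x)
        have "(\<lambda>n. complex_of_real (x - \<beta>) * (complex_of_real (x ^ n) * w ^ Suc n)) sums (complex_of_real (x - \<beta>) * gz z x)"
          unfolding z_def by (rule sums_mult[OF g_series[OF elim R1 w0 nw2]])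
        then show ?case by (simp add: mult_ac)
      qed
    qed
    then show ?thesis by (simp only: integral_mult_left_zero integral_complex_of_real)
  qed
  have "(\<lambda>n. complex_of_real (\<integral>p. Dn n (fst p) (snd p) \<partial>P) * w ^ Suc n
      - complex_of_real (1/\<gamma>) * (complex_of_real (\<integral>x. (x - \<beta>) * x ^ n \<partial>Mu) * w ^ Suc n)) sums CL z"
    unfolding CL_def by (rule sums_diff[OF S1 sums_mult[OF S2]])
  moreover have "complex_of_real (\<integral>p. Dn n (fst p) (snd p) \<partial>P) * w ^ Suc n
      - complex_of_real (1/\<gamma>) * (complex_of_real (\<integral>x. (x - \<beta>) * x ^ n \<partial>Mu) * w ^ Suc n)
      = complex_of_real (Lam (\<lambda>x. x ^ n) (\<lambda>x. real n * x ^ (n - 1))) * w ^ Suc n" for n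
    unfolding Lam_def dd_pow by (simp add: algebra_simps)
  ultimately show ?thesis unfolding z_def w_def by simp
qed

lemma Im_inv_is: "0 < s \<Longrightarrow> Im (1 / (\<i> * complex_of_real s)) \<noteq> 0"
proof -
  assume s: "0 < s"
  have "1 / (\<i> * complex_of_real s) = complex_of_real (-1/s) * \<i>" using s by (simp add: field_simps)
  then show ?thesis using s by simp
qed

lemma Lam_iff:
  assumes "C1pair f f'"
  shows "(\<integral>p. divdiff f (fst p) (snd p) \<partial>P) = (1/\<gamma>) * (\<integral>x. (x - \<beta>) * f x \<partial>Mu) \<longleftrightarrow> Lam f f' = 0"
proof -
  have "divdiff f = dd f f'" using assms unfolding C1pair_def by (intro ext divdiff_dd) auto
  then show ?thesis unfolding Lam_def by simp
qed

lemma coeff_bound: "\<bar>Lam (\<lambda>x. x ^ n) (\<lambda>x. real n * x ^ (n - 1))\<bar> \<le> (1 + (R + \<bar>\<beta>\<bar>) / \<gamma>) * real (Suc n) * R ^ n"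
proof -
  have [measurable]: "(\<lambda>p. Dn n (fst p) (snd p)) \<in> borel_measurable (borel \<Otimes>\<^sub>M borel)"
    unfolding Dn_def by measurable
  have a: "norm (\<integral>p. Dn n (fst p) (snd p) \<partial>P) \<le> real n * R ^ n"
    by (rule intP(2)) (use Dn_bound R1 in auto)
  have b: "norm (\<integral>x. (x - \<beta>) * x ^ n \<partial>Mu) \<le> (R + \<bar>\<beta>\<bar>) * R ^ n"
  proof (rule intM(2))
    show "(\<lambda>x. (x - \<beta>) * x ^ n) \<in> borel_measurable borel" by measurable
    fix x :: real assume x: "\<bar>x\<bar> \<le> R"
    have "\<bar>x - \<beta>\<bar> \<le> R + \<bar>\<beta>\<bar>" using x by linarith
    moreover have "\<bar>x\<bar> ^ n \<le> R ^ n" using x by (intro power_mono) auto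
    ultimately show "norm ((x - \<beta>) * x ^ n) \<le> (R + \<bar>\<beta>\<bar>) * R ^ n"
      unfolding real_norm_def abs_mult power_abs by (intro mult_mono) auto
  qed
  have L: "Lam (\<lambda>x. x ^ n) (\<lambda>x. real n * x ^ (n - 1))
      = (\<integral>p. Dn n (fst p) (snd p) \<partial>P) - (1/\<gamma>) * (\<integral>x. (x - \<beta>) * x ^ n \<partial>Mu)"
    unfolding Lam_def dd_pow ..
  have Rn: "0 \<le> R ^ n" using R1 by simp
  have "\<bar>Lam (\<lambda>x. x ^ n) (\<lambda>x. real n * x ^ (n - 1))\<bar> \<le> real n * R ^ n + (1/\<gamma>) * ((R + \<bar>\<beta>\<bar>) * R ^ n)"
  proof -
    let ?a = "\<integral>p. Dn n (fst p) (snd p) \<partial>P" and ?b = "\<integral>x. (x - \<beta>) * x ^ n \<partial>Mu"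
    have "\<bar>?a - (1/\<gamma>) * ?b\<bar> \<le> \<bar>?a\<bar> + \<bar>(1/\<gamma>) * ?b\<bar>" by (rule abs_triangle_ineq4)
    also have "\<bar>(1/\<gamma>) * ?b\<bar> = (1/\<gamma>) * \<bar>?b\<bar>" using gam by (simp add: abs_mult)
    also have "(1/\<gamma>) * \<bar>?b\<bar> \<le> (1/\<gamma>) * ((R + \<bar>\<beta>\<bar>) * R ^ n)"
      using b gam by (intro mult_left_mono) auto
    finally show ?thesis unfolding L using a by simp
  qed
  also have "\<dots> \<le> real (Suc n) * R ^ n + ((R + \<bar>\<beta>\<bar>) / \<gamma>) * (real (Suc n) * R ^ n)"
  proof (intro add_mono mult_right_mono)
    show "(1/\<gamma>) * ((R + \<bar>\<beta>\<bar>) * R ^ n) \<le> ((R + \<bar>\<beta>\<bar>) / \<gamma>) * (real (Suc n) * R ^ n)"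
    proof -
      have "(1/\<gamma>) * ((R + \<bar>\<beta>\<bar>) * R ^ n) = ((R + \<bar>\<beta>\<bar>) / \<gamma>) * (1 * R ^ n)" by simp
      also have "\<dots> \<le> ((R + \<bar>\<beta>\<bar>) / \<gamma>) * (real (Suc n) * R ^ n)"
        using gam R1 Rn by (intro mult_left_mono mult_right_mono) auto
      finally show ?thesis .
    qed
  qed (use Rn in auto)
  also have "\<dots> = (1 + (R + \<bar>\<beta>\<bar>) / \<gamma>) * real (Suc n) * R ^ n" by (simp add: algebra_simps add_divide_distrib)
  finally show ?thesis .
qed

lemma bwd:
  assumes rel: "\<forall>z. Im z \<noteq> 0 \<longrightarrow> cauchy_transform Mu z
      = 1 / (z - complex_of_real \<beta> - complex_of_real \<gamma> * cauchy_transform Nu z)"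
    and C: "C1pair f f'"
  shows "Lam f f' = 0"
proof -
  have CL0: "CL z = 0" if z: "Im z \<noteq> 0" for z
  proof -
    have g: "complex_of_real \<gamma> \<noteq> 0" using gam by simp
    have "cauchy_transform Nu z * cauchy_transform Mu z
        - (1 / complex_of_real \<gamma>) * ((z - complex_of_real \<beta>) * cauchy_transform Mu z - 1) = 0"
      by (rule alg_bwd[OF g GM_ne0[OF z]]) (use rel z in auto)
    then show ?thesis unfolding CL_eq[OF z] by simp
  qed
  have Z: "Lam (\<lambda>x. x ^ n) (\<lambda>x. real n * x ^ (n - 1)) = 0" for n
  proof (rule coeff_zero[where c="\<lambda>n. Lam (\<lambda>x. x ^ n) (\<lambda>x. real n * x ^ (n - 1))" and R=R
      and C="1 + (R + \<bar>\<beta>\<bar>) / \<gamma>" and \<delta>="1 / (2 * R)" and k=n])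
    show "1 \<le> R" by (rule R1)
    show "0 \<le> 1 + (R + \<bar>\<beta>\<bar>) / \<gamma>" using R1 gam by (simp add: add_nonneg_nonneg)
    show "\<bar>Lam (\<lambda>x. x ^ n) (\<lambda>x. real n * x ^ (n - 1))\<bar> \<le> (1 + (R + \<bar>\<beta>\<bar>) / \<gamma>) * real (Suc n) * R ^ n" for n
      by (rule coeff_bound)
    show "0 < 1 / (2 * R)" using R1 by simp
    fix s :: real assume s: "0 < s" "s \<le> 1 / (2 * R)"
    show "(\<lambda>n. complex_of_real (Lam (\<lambda>x. x ^ n) (\<lambda>x. real n * x ^ (n - 1))) * (\<i> * complex_of_real s) ^ Suc n) sums 0"
      using CL_series[OF s] CL0[OF Im_inv_is[OF s(1)]] by simp
  qed
  show ?thesis by (rule Lam_all[OF Z C])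
qed

lemma fwd:
  assumes H: "\<And>f f'. C1pair f f' \<Longrightarrow> Lam f f' = 0" and z: "Im z \<noteq> 0"
  shows "cauchy_transform Mu z = 1 / (z - complex_of_real \<beta> - complex_of_real \<gamma> * cauchy_transform Nu z)"
proof -
  have "Re (CL z) = 0" using H[OF C1_Re[OF z]] Lam_Re[OF z] by simp
  moreover have "Im (CL z) = 0" using H[OF C1_Im[OF z]] Lam_Im[OF z] by simp
  ultimately have "CL z = 0" by (simp add: complex_eq_iff)
  then have e: "cauchy_transform Nu z * cauchy_transform Mu z
        - (1 / complex_of_real \<gamma>) * ((z - complex_of_real \<beta>) * cauchy_transform Mu z - 1) = 0"
    unfolding CL_eq[OF z] by simp
  have g: "complex_of_real \<gamma> \<noteq> 0" using gam by simp
  show ?thesis by (rule alg_fwd[OF g e])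
qed

lemma main:
  "(\<forall>f. C1_real f \<longrightarrow>
            (\<integral>p. divdiff f (fst p) (snd p) \<partial>(Nu \<Otimes>\<^sub>M Mu))
              = (1 / \<gamma>) * (\<integral>x. (x - \<beta>) * f x \<partial>Mu))
   \<longleftrightarrow>
   (\<forall>z. Im z \<noteq> 0 \<longrightarrow>
            cauchy_transform Mu z
              = 1 / (z - complex_of_real \<beta> - complex_of_real \<gamma> * cauchy_transform Nu z))"
proof
  assume L: "\<forall>f. C1_real f \<longrightarrow>
            (\<integral>p. divdiff f (fst p) (snd p) \<partial>(Nu \<Otimes>\<^sub>M Mu))
              = (1 / \<gamma>) * (\<integral>x. (x - \<beta>) * f x \<partial>Mu)"
  have H: "Lam f f' = 0" if C: "C1pair f f'" for f f'
  proof -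
    have "C1_real f" using C unfolding C1pair_def C1_real_def by blast
    then show ?thesis using L Lam_iff[OF C] by blast
  qed
  show "\<forall>z. Im z \<noteq> 0 \<longrightarrow> cauchy_transform Mu z
        = 1 / (z - complex_of_real \<beta> - complex_of_real \<gamma> * cauchy_transform Nu z)"
    using fwd[OF H] by blast
next
  assume Rr: "\<forall>z. Im z \<noteq> 0 \<longrightarrow> cauchy_transform Mu z
        = 1 / (z - complex_of_real \<beta> - complex_of_real \<gamma> * cauchy_transform Nu z)"
  show "\<forall>f. C1_real f \<longrightarrow>
            (\<integral>p. divdiff f (fst p) (snd p) \<partial>(Nu \<Otimes>\<^sub>M Mu))
              = (1 / \<gamma>) * (\<integral>x. (x - \<beta>) * f x \<partial>Mu)"
  proof (intro allI impI)
    fix f assume "C1_real f"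
    then obtain f' where C: "C1pair f f'" unfolding C1_real_def C1pair_def by blast
    show "(\<integral>p. divdiff f (fst p) (snd p) \<partial>(Nu \<Otimes>\<^sub>M Mu)) = (1 / \<gamma>) * (\<integral>x. (x - \<beta>) * f x \<partial>Mu)"
      using Lam_iff[OF C] bwd[OF Rr C] by blast
  qed
qed

end


lemma cs_bound:
  assumes "cs_prob M"
  obtains R where "R \<ge> 1" "AE x in M. \<bar>x\<bar> \<le> R" "prob_space M" "sets M = sets borel"
proof -
  from assms obtain K where P: "prob_space M" and S: "sets M = sets borel" and K: "compact K" "emeasure M K = 1"
    unfolding cs_prob_def by blast
  interpret prob_space M by (rule P)
  have Ks: "K \<in> sets M" using S K(1) by (simp add: borel_closed compact_imp_closed)
  have ae: "AE x in M. x \<in> K"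
    using AE_in_set_eq_1[OF Ks] K(2) by (simp add: emeasure_eq_measure)
  obtain B where B: "\<forall>x\<in>K. norm x \<le> B" using compact_imp_bounded[OF K(1)] bounded_iff by metis
  have "AE x in M. \<bar>x\<bar> \<le> max 1 B" using ae by eventually_elim (use B in auto)
  then show ?thesis using that[of "max 1 B"] P S by auto
qed

theorem lemma4p2:
  fixes \<mu> \<nu> :: "real measure" and \<beta> \<gamma> :: real
  assumes "cs_prob \<mu>" and "cs_prob \<nu>" and "\<gamma> > 0"
  shows "(\<forall>f. C1_real f \<longrightarrow>
            (\<integral>p. divdiff f (fst p) (snd p) \<partial>(\<nu> \<Otimes>\<^sub>M \<mu>))
              = (1 / \<gamma>) * (\<integral>x. (x - \<beta>) * f x \<partial>\<mu>))
         \<longleftrightarrow>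
         (\<forall>z. Im z \<noteq> 0 \<longrightarrow>
            cauchy_transform \<mu> z
              = 1 / (z - complex_of_real \<beta> - complex_of_real \<gamma> * cauchy_transform \<nu> z))"
proof -
  obtain R1 where R1: "R1 \<ge> 1" "AE x in \<mu>. \<bar>x\<bar> \<le> R1" and Pm: "prob_space \<mu>" and Sm: "sets \<mu> = sets borel"
    using cs_bound[OF assms(1)] by blast
  obtain R2 where R2: "R2 \<ge> 1" "AE x in \<nu>. \<bar>x\<bar> \<le> R2" and Pn: "prob_space \<nu>" and Sn: "sets \<nu> = sets borel"
    using cs_bound[OF assms(2)] by blast
  define R where "R = max R1 R2"
  have aem: "AE x in \<mu>. \<bar>x\<bar> \<le> R" using R1(2) by eventually_elim (auto simp: R_def)
  have aen: "AE x in \<nu>. \<bar>x\<bar> \<le> R" using R2(2) by eventually_elim (auto simp: R_def)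
  interpret pp: pair_prob_space \<nu> \<mu>
    using Pm Pn by (simp add: pair_prob_space_def pair_sigma_finite_def prob_space_imp_sigma_finite)
  interpret L: LL \<nu> \<mu> R \<beta> \<gamma>
    by unfold_locales (use Sm Sn R1 assms(3) aem aen in \<open>auto simp: R_def\<close>)
  show ?thesis by (rule L.main)
qed


end
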